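(* Let $2\le d_1\le d_2\le d_3\le d_4$, let $\rho$ be any (normalized) mixed state on $H_1\otimes H_2\otimes H_3\otimes H_4$ with $\dim H_i=d_i$, let $2\le m\le d_1$, and let $p_2,\dots,p_m\in[0,1]$ with $\sum_{s=2}^mp_s=1$. Then $$C^2(\rho)\ \ge\ \sum_{s=2}^{m}\frac{p_s}{\binom{d_1-2}{s-2}\binom{d_2-2}{s-2}\binom{d_3-1}{s-1}\binom{d_4-1}{s-1}}\sum_{\rho_{s\otimes s\otimes s\otimes s}}C^2(\rho_{s\otimes s\otimes s\otimes s}),$$ where for each $s$ the inner sum runs over all possible $s\otimes s\otimes s\otimes s$ substates of $\rho$.
   Context: Each $H_i\cong\mathbb{C}^{d_i}$ has a fixed computational basis. $C$ denotes the four-partite concurrence: for a (not necessarily normalized) vector $|\varphi\rangle$ with $\sigma=|\varphi\rangle\langle\varphi|$, $C(|\varphi\rangle)=2^{-1}\sqrt{14(\mathrm{tr}\,\sigma)^2-\sum_\alpha\mathrm{tr}(\sigma_\alpha^2)}$, $\alpha$ running over the 14 nonempty proper subsets of $\{1,2,3,4\}$ and $\sigma_\alpha=\mathrm{tr}_{\bar\alpha}\sigma$; for a (possibly unnormalized) positive semidefinite $\sigma$, $C(\sigma)=\min\sum_iC(|\psi_i\rangle)$ over all decompositions $\sigma=\sum_i|\psi_i\rangle\langle\psi_i|$ into unnormalized vectors. Substates: given subsets $S_i\subseteq\{1,\dots,d_i\}$ with $|S_i|=s$ and projectors $G_i=\sum_{x\in S_i}|x\rangle\langle x|$, the $s\otimes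 s\otimes s\otimes s$ substate of $\rho$ is the unnormalized operator $(G_1\otimes G_2\otimes G_3\otimes G_4)\rho(G_1\otimes G_2\otimes G_3\otimes G_4)$. $\binom{n}{k}=n!/(k!(n-k)!)$. *)

theory Defs
  imports Complex_Main
begin

text \<open>Four parties, indexed 0,1,2,3. The local dimensions are d 0, d 1, d 2, d 3.
  A multi-index is a function nat \<Rightarrow> nat; only coordinates in the relevant set of
  parties matter, all others are 0. Vectors are functions from multi-indices to complex,
  operators are kernels (matrices) indexed by pairs of multi-indices.\<close>

type_synonym midx = "nat \<Rightarrow> nat"
type_synonym qvec = "midx \<Rightarrow> complex"
type_synonym qop = "midx \<Rightarrow> midx \<Rightarrow> complex"

definition parties :: "nat set" where
  "parties = {0..3}"

text \<open>Computational basis of the tensor product of the spaces of the parties in A.\<close>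
definition box :: "(nat \<Rightarrow> nat) \<Rightarrow> nat set \<Rightarrow> midx set" where
  "box d A = {i. (\<forall>k\<in>A. i k < d k) \<and> (\<forall>k. k \<notin> A \<longrightarrow> i k = 0)}"

definition merge :: "nat set \<Rightarrow> midx \<Rightarrow> midx \<Rightarrow> midx" where
  "merge A a b = (\<lambda>k. if k \<in> A then a k else b k)"

text \<open>Reduced operator sigma_A = tr_{complement of A} sigma.\<close>
definition ptrace :: "(nat \<Rightarrow> nat) \<Rightarrow> nat set \<Rightarrow> qop \<Rightarrow> qop" where
  "ptrace d A \<sigma> a a' = (\<Sum>b\<in>box d (parties - A). \<sigma> (merge A a b) (merge A a' b))"

definition trace_op :: "(nat \<Rightarrow> nat) \<Rightarrow> qop \<Rightarrow> complex" where
  "trace_op d \<sigma> = (\<Sum>i\<in>box d parties. \<sigma> i i)"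

definition tr_sq_red :: "(nat \<Rightarrow> nat) \<Rightarrow> nat set \<Rightarrow> qop \<Rightarrow> complex" where
  "tr_sq_red d A \<sigma> = (\<Sum>a\<in>box d A. \<Sum>a'\<in>box d A. ptrace d A \<sigma> a a' * ptrace d A \<sigma> a' a)"

definition outer :: "qvec \<Rightarrow> qop" where
  "outer \<phi> i j = \<phi> i * cnj (\<phi> j)"

definition bipartitions :: "nat set set" where
  "bipartitions = {A. A \<subseteq> parties \<and> A \<noteq> {} \<and> A \<noteq> parties}"

definition conc_pure :: "(nat \<Rightarrow> nat) \<Rightarrow> qvec \<Rightarrow> real" where
  "conc_pure d \<phi> = (let \<sigma> = outer \<phi> in
     (1/2) * sqrt (14 * (Re (trace_op d \<sigma>))\<^sup>2 - (\<Sum>A\<in>bipartitions. Re (tr_sq_red d A \<sigma>))))"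

text \<open>Concurrence of a (possibly unnormalized) positive semidefinite operator:
  the infimum (the paper's min) over all finite decompositions
  sigma = sum_k |psi_k><psi_k| into unnormalized vectors.\<close>
definition conc_mixed :: "(nat \<Rightarrow> nat) \<Rightarrow> qop \<Rightarrow> real" where
  "conc_mixed d \<sigma> = Inf {(\<Sum>k<n. conc_pure d (\<psi> k)) | n (\<psi> :: nat \<Rightarrow> qvec).
      \<forall>i\<in>box d parties. \<forall>j\<in>box d parties. \<sigma> i j = (\<Sum>k<n. \<psi> k i * cnj (\<psi> k j))}"

definition density_op :: "(nat \<Rightarrow> nat) \<Rightarrow> qop \<Rightarrow> bool" where
  "density_op d \<rho> \<longleftrightarrow>
     (\<forall>i\<in>box d parties. \<forall>j\<in>box d parties. \<rho> j i = cnj (\<rho> i j)) \<and>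
     (\<forall>v::qvec. Re (\<Sum>i\<in>box d parties. \<Sum>j\<in>box d parties. cnj (v i) * \<rho> i j * v j) \<ge> 0) \<and>
     trace_op d \<rho> = 1"

definition subset_choices :: "(nat \<Rightarrow> nat) \<Rightarrow> nat \<Rightarrow> (nat \<Rightarrow> nat set) set" where
  "subset_choices d s = {S. (\<forall>k\<in>parties. S k \<subseteq> {..<d k} \<and> card (S k) = s) \<and>
                            (\<forall>k. k \<notin> parties \<longrightarrow> S k = {})}"

text \<open>The substate (G_1 \<otimes> G_2 \<otimes> G_3 \<otimes> G_4) rho (G_1 \<otimes> G_2 \<otimes> G_3 \<otimes> G_4).\<close>
definition substate :: "(nat \<Rightarrow> nat set) \<Rightarrow> qop \<Rightarrow> qop" where
  "substate S \<rho> i j = (if (\<forall>k\<in>parties. i k \<in> S k \<and> j k \<in> S k) then \<rho> i j else 0)"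

end

theory Submission
  imports Defs "HOL-Analysis.L2_Norm"
begin

lemma parties_eq: "parties = {0,1,2,3}" by (auto simp: parties_def)

lemma finite_box: assumes "A \<subseteq> parties" shows "finite (box d A)"
proof -
  let ?g = "\<lambda>i::midx. (i 0, i 1, i 2, i 3)"
  have inj: "inj_on ?g (box d A)"
  proof (rule inj_onI)
    fix x y assume x: "x \<in> box d A" and y: "y \<in> box d A" and e: "?g x = ?g y"
    show "x = y"
    proof
      fix k show "x k = y k"
      proof (cases "k \<in> A")
        case True then have "k \<in> {0,1,2,3}" using assms parties_eq by auto
        then show ?thesis using e by auto
      next
        case False then show ?thesis using x y by (auto simp: box_def)
      qed
    qed
  qed
  have "?g ` box d A \<subseteq> {..<d 0+1} \<times> {..<d 1+1} \<times> {..<d 2+1} \<times> {..<d 3+1}"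
  proof
    fix t assume "t \<in> ?g ` box d A"
    then obtain i where i: "i \<in> box d A" "t = ?g i" by auto
    have "\<And>k. i k < d k + 1"
    proof -
      fix k show "i k < d k + 1" using i(1) unfolding box_def by (cases "k \<in> A") auto
    qed
    then show "t \<in> {..<d 0+1} \<times> {..<d 1+1} \<times> {..<d 2+1} \<times> {..<d 3+1}" using i by auto
  qed
  then have "finite (?g ` box d A)" by (rule finite_subset) (intro finite_cartesian_product finite_lessThan)
  then show ?thesis using inj finite_imageD by blast
qed

lemma merge_bij: assumes "A \<subseteq> parties"
  shows "bij_betw (\<lambda>(a,b). merge A a b) (box d A \<times> box d (parties - A)) (box d parties)"
proof (rule bij_betw_byWitness[where f'="\<lambda>i. (\<lambda>k. if k \<in> A then i k else 0, \<lambda>k. if k \<in> A then 0 else i k)"])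
  show "\<forall>a\<in>box d A \<times> box d (parties - A).
     (\<lambda>i. (\<lambda>k. if k \<in> A then i k else 0, \<lambda>k. if k \<in> A then 0 else i k)) ((\<lambda>(a, b). merge A a b) a) = a"
    by (auto simp: merge_def box_def fun_eq_iff)
  show "\<forall>a'\<in>box d parties.
       (\<lambda>(a, b). merge A a b) ((\<lambda>i. (\<lambda>k. if k \<in> A then i k else 0, \<lambda>k. if k \<in> A then 0 else i k)) a') = a'"
    by (auto simp: merge_def box_def fun_eq_iff)
  show "(\<lambda>(a, b). merge A a b) ` (box d A \<times> box d (parties - A)) \<subseteq> box d parties"
    using assms by (auto simp: merge_def box_def)
  show "(\<lambda>i. (\<lambda>k. if k \<in> A then i k else 0, \<lambda>k. if k \<in> A then 0 else i k)) ` box d parties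
    \<subseteq> box d A \<times> box d (parties - A)"
    using assms by (auto simp: merge_def box_def)
qed

lemma sum_box_split: assumes "A \<subseteq> parties"
  shows "(\<Sum>i\<in>box d parties. f i) = (\<Sum>a\<in>box d A. \<Sum>b\<in>box d (parties - A). f (merge A a b))"
proof -
  have "(\<Sum>i\<in>box d parties. f i) = (\<Sum>p\<in>box d A \<times> box d (parties - A). f ((\<lambda>(a,b). merge A a b) p))"
    using sum.reindex_bij_betw[OF merge_bij[OF assms], of f] by simp
  also have "\<dots> = (\<Sum>a\<in>box d A. \<Sum>b\<in>box d (parties - A). f (merge A a b))"
    by (simp add: sum.cartesian_product split_def)
  finally show ?thesis .
qed

definition mnr :: "nat set \<Rightarrow> qvec \<Rightarrow> midx \<Rightarrow> midx \<Rightarrow> midx \<Rightarrow> midx \<Rightarrow> complex" where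
  "mnr A \<psi> a a' b b' = \<psi> (merge A a b) * \<psi> (merge A a' b') - \<psi> (merge A a b') * \<psi> (merge A a' b)"

definition Rm :: "(nat \<Rightarrow> nat) \<Rightarrow> nat set \<Rightarrow> qvec \<Rightarrow> real" where
  "Rm d A \<psi> = (\<Sum>a\<in>box d A. \<Sum>a'\<in>box d A. \<Sum>b\<in>box d (parties - A). \<Sum>b'\<in>box d (parties - A).
      (cmod (mnr A \<psi> a a' b b'))\<^sup>2)"

lemma Rm_nonneg: "0 \<le> Rm d A \<psi>"
  unfolding Rm_def by (intro sum_nonneg) auto

lemma key_identity:
  assumes A: "A \<subseteq> parties"
  shows "complex_of_real (Rm d A \<psi>) = 2 * ((trace_op d (outer \<psi>))\<^sup>2 - tr_sq_red d A (outer \<psi>))"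
proof -
  define Ba where "Ba = box d A"
  define Bb where "Bb = box d (parties - A)"
  define f where "f a b = \<psi> (merge A a b)" for a b
  have T: "trace_op d (outer \<psi>) = (\<Sum>a\<in>Ba. \<Sum>b\<in>Bb. f a b * cnj (f a b))"
    unfolding trace_op_def using sum_box_split[OF A] by (simp add: outer_def Ba_def Bb_def f_def)
  have TR: "tr_sq_red d A (outer \<psi>) = (\<Sum>a\<in>Ba. \<Sum>a'\<in>Ba. (\<Sum>b\<in>Bb. f a b * cnj (f a' b)) * (\<Sum>b'\<in>Bb. f a' b' * cnj (f a b')))"
    unfolding tr_sq_red_def ptrace_def by (simp add: outer_def Ba_def Bb_def f_def)
  define X where "X a a' b b' = f a b * f a' b'" for a a' b b'
  define Y where "Y a a' b b' = f a b' * f a' b" for a a' b b'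
  have L: "complex_of_real (Rm d A \<psi>) = (\<Sum>a\<in>Ba. \<Sum>a'\<in>Ba. \<Sum>b\<in>Bb. \<Sum>b'\<in>Bb.
      (X a a' b b' - Y a a' b b') * cnj (X a a' b b' - Y a a' b b'))"
    unfolding Rm_def by (simp only: of_real_sum complex_norm_square) (simp add: mnr_def X_def Y_def f_def Ba_def Bb_def)
  also have "\<dots> = (\<Sum>a\<in>Ba. \<Sum>a'\<in>Ba. \<Sum>b\<in>Bb. \<Sum>b'\<in>Bb. X a a' b b' * cnj (X a a' b b'))
     + (\<Sum>a\<in>Ba. \<Sum>a'\<in>Ba. \<Sum>b\<in>Bb. \<Sum>b'\<in>Bb. Y a a' b b' * cnj (Y a a' b b'))
     - (\<Sum>a\<in>Ba. \<Sum>a'\<in>Ba. \<Sum>b\<in>Bb. \<Sum>b'\<in>Bb. X a a' b b' * cnj (Y a a' b b'))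
     - (\<Sum>a\<in>Ba. \<Sum>a'\<in>Ba. \<Sum>b\<in>Bb. \<Sum>b'\<in>Bb. Y a a' b b' * cnj (X a a' b b'))"
    by (simp add: algebra_simps sum.distrib sum_subtractf)
  also have "(\<Sum>a\<in>Ba. \<Sum>a'\<in>Ba. \<Sum>b\<in>Bb. \<Sum>b'\<in>Bb. Y a a' b b' * cnj (Y a a' b b'))
      = (\<Sum>a\<in>Ba. \<Sum>a'\<in>Ba. \<Sum>b\<in>Bb. \<Sum>b'\<in>Bb. X a a' b b' * cnj (X a a' b b'))"
    unfolding X_def Y_def
    by (rule sum.cong[OF refl], rule sum.cong[OF refl], subst sum.swap) (simp add: algebra_simps)
  also have "(\<Sum>a\<in>Ba. \<Sum>a'\<in>Ba. \<Sum>b\<in>Bb. \<Sum>b'\<in>Bb. Y a a' b b' * cnj (X a a' b b'))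
      = (\<Sum>a\<in>Ba. \<Sum>a'\<in>Ba. \<Sum>b\<in>Bb. \<Sum>b'\<in>Bb. X a a' b b' * cnj (Y a a' b b'))"
    unfolding X_def Y_def
    by (rule sum.cong[OF refl], rule sum.cong[OF refl], subst sum.swap) (simp add: algebra_simps)
  also have "(\<Sum>a\<in>Ba. \<Sum>a'\<in>Ba. \<Sum>b\<in>Bb. \<Sum>b'\<in>Bb. X a a' b b' * cnj (X a a' b b'))
      = (trace_op d (outer \<psi>))\<^sup>2"
  proof -
    have "(trace_op d (outer \<psi>))\<^sup>2 = (\<Sum>a\<in>Ba. \<Sum>b\<in>Bb. \<Sum>a'\<in>Ba. \<Sum>b'\<in>Bb. X a a' b b' * cnj (X a a' b b'))"
      unfolding T power2_eq_square X_def
      by (simp only: sum_distrib_left sum_distrib_right) (intro sum.cong refl; simp add: algebra_simps)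
    also have "\<dots> = (\<Sum>a\<in>Ba. \<Sum>a'\<in>Ba. \<Sum>b\<in>Bb. \<Sum>b'\<in>Bb. X a a' b b' * cnj (X a a' b b'))"
      by (rule sum.cong[OF refl], rule sum.swap)
    finally show ?thesis by simp
  qed
  also have "(\<Sum>a\<in>Ba. \<Sum>a'\<in>Ba. \<Sum>b\<in>Bb. \<Sum>b'\<in>Bb. X a a' b b' * cnj (Y a a' b b'))
      = tr_sq_red d A (outer \<psi>)"
    unfolding TR X_def Y_def
    by (simp only: sum_product) (intro sum.cong refl; simp add: algebra_simps)
  finally show ?thesis by simp
qed

lemma bip_sub: "A \<in> bipartitions \<Longrightarrow> A \<subseteq> parties"
  by (auto simp: bipartitions_def)

lemma bip_eq: "bipartitions = Pow parties - {{}, parties}"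
  by (auto simp: bipartitions_def)

lemma finite_parties: "finite parties" by (simp add: parties_def)
lemma card_parties: "card parties = 4" by (simp add: parties_def)

lemma finite_bip: "finite bipartitions" by (simp add: bip_eq finite_parties)

lemma card_bip: "card bipartitions = 14"
proof -
  have "card (Pow parties - {{}, parties}) = card (Pow parties) - card {{}, parties}"
    by (rule card_Diff_subset) (auto simp: finite_parties)
  also have "card {{}, parties} = 2" by (simp add: parties_def)
  also have "card (Pow parties) = 16" by (simp add: card_Pow finite_parties card_parties)
  finally show ?thesis by (simp add: bip_eq)
qed

definition Rt :: "(nat \<Rightarrow> nat) \<Rightarrow> qvec \<Rightarrow> real" where
  "Rt d \<psi> = (\<Sum>A\<in>bipartitions. Rm d A \<psi>)"

lemma Rt_nonneg: "0 \<le> Rt d \<psi>" unfolding Rt_def by (intro sum_nonneg Rm_nonneg)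

lemma trace_real: "trace_op d (outer \<psi>) = complex_of_real (\<Sum>i\<in>box d parties. (cmod (\<psi> i))\<^sup>2)"
  unfolding trace_op_def outer_def of_real_sum by (simp only: complex_norm_square)

lemma Re_trsq: assumes "A \<subseteq> parties"
  shows "Re (tr_sq_red d A (outer \<psi>)) = (Re (trace_op d (outer \<psi>)))\<^sup>2 - Rm d A \<psi> / 2"
proof -
  have "Re (complex_of_real (Rm d A \<psi>)) = Re (2 * ((trace_op d (outer \<psi>))\<^sup>2 - tr_sq_red d A (outer \<psi>)))"
    using key_identity[OF assms] by simp
  then have "Rm d A \<psi> = 2 * (Re ((trace_op d (outer \<psi>))\<^sup>2) - Re (tr_sq_red d A (outer \<psi>)))"
    by simp
  moreover have "Re ((trace_op d (outer \<psi>))\<^sup>2) = (Re (trace_op d (outer \<psi>)))\<^sup>2"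
    unfolding trace_real by (simp only: of_real_power[symmetric] Re_complex_of_real)
  ultimately show ?thesis by (simp add: field_simps)
qed

lemma conc_pure_eq: "conc_pure d \<psi> = (1/2) * sqrt (Rt d \<psi> / 2)"
proof -
  have "(\<Sum>A\<in>bipartitions. Re (tr_sq_red d A (outer \<psi>)))
      = (\<Sum>A\<in>bipartitions. (Re (trace_op d (outer \<psi>)))\<^sup>2 - Rm d A \<psi> / 2)"
    by (intro sum.cong refl Re_trsq bip_sub)
  also have "\<dots> = 14 * (Re (trace_op d (outer \<psi>)))\<^sup>2 - Rt d \<psi> / 2"
    by (simp add: sum_subtractf card_bip Rt_def sum_divide_distrib)
  finally show ?thesis unfolding conc_pure_def Let_def by simp
qed

lemma conc_pure_nonneg: "0 \<le> conc_pure d \<psi>"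
  by (simp add: conc_pure_eq Rt_nonneg)

lemma conc_pure_sq: "(conc_pure d \<psi>)\<^sup>2 = Rt d \<psi> / 8"
proof -
  have "(sqrt (Rt d \<psi> / 2))\<^sup>2 = Rt d \<psi> / 2" using Rt_nonneg by simp
  then show ?thesis by (simp add: conc_pure_eq power_mult_distrib power_divide)
qed

definition F4 :: "nat set \<times> nat set \<times> nat set \<times> nat set \<Rightarrow> nat \<Rightarrow> nat set" where
  "F4 t = (case t of (T0,T1,T2,T3) \<Rightarrow> (\<lambda>k. if k = 0 then T0 else if k = 1 then T1 else if k = 2 then T2
      else if k = 3 then T3 else {}))"

definition XS :: "(nat \<Rightarrow> nat) \<Rightarrow> nat \<Rightarrow> (nat \<Rightarrow> nat set \<Rightarrow> bool) \<Rightarrow> nat \<Rightarrow> nat set set" where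
  "XS d s P k = {T. T \<subseteq> {..<d k} \<and> card T = s \<and> P k T}"

lemma finite_XS: "finite (XS d s P k)"
  by (rule finite_subset[of _ "Pow {..<d k}"]) (auto simp: XS_def)

lemma sc_image: "{S\<in>subset_choices d s. \<forall>k\<in>parties. P k (S k)} =
   F4 ` (XS d s P 0 \<times> XS d s P 1 \<times> XS d s P 2 \<times> XS d s P 3)"
proof (rule set_eqI, rule iffI)
  fix S assume S: "S \<in> {S\<in>subset_choices d s. \<forall>k\<in>parties. P k (S k)}"
  have "S = F4 (S 0, S 1, S 2, S 3)"
  proof
    fix k show "S k = F4 (S 0, S 1, S 2, S 3) k"
      using S by (auto simp: F4_def subset_choices_def parties_eq)
  qed
  moreover have "(S 0, S 1, S 2, S 3) \<in> XS d s P 0 \<times> XS d s P 1 \<times> XS d s P 2 \<times> XS d s P 3"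
    using S by (auto simp: XS_def subset_choices_def parties_eq)
  ultimately show "S \<in> F4 ` (XS d s P 0 \<times> XS d s P 1 \<times> XS d s P 2 \<times> XS d s P 3)" by blast
next
  fix S assume "S \<in> F4 ` (XS d s P 0 \<times> XS d s P 1 \<times> XS d s P 2 \<times> XS d s P 3)"
  then obtain T0 T1 T2 T3 where T: "T0 \<in> XS d s P 0" "T1 \<in> XS d s P 1" "T2 \<in> XS d s P 2" "T3 \<in> XS d s P 3"
    and S: "S = F4 (T0,T1,T2,T3)" by auto
  show "S \<in> {S\<in>subset_choices d s. \<forall>k\<in>parties. P k (S k)}"
    using T unfolding S by (auto simp: XS_def subset_choices_def parties_eq F4_def)
qed

lemma F4_inj: "inj F4"
proof (rule injI)
  fix x y assume e: "F4 x = F4 y"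
  obtain a0 a1 a2 a3 where x: "x = (a0,a1,a2,a3)" by (cases x) auto
  obtain b0 b1 b2 b3 where y: "y = (b0,b1,b2,b3)" by (cases y) auto
  have "\<And>k. F4 x k = F4 y k" using e by simp
  from this[of 0] this[of 1] this[of 2] this[of 3] show "x = y"
    unfolding x y F4_def by simp
qed

lemma card_sc_filter: "card {S\<in>subset_choices d s. \<forall>k\<in>parties. P k (S k)} =
   card (XS d s P 0) * card (XS d s P 1) * card (XS d s P 2) * card (XS d s P 3)"
  unfolding sc_image
  by (simp add: card_image[OF inj_on_subset[OF F4_inj]] card_cartesian_product)

lemma finite_sc_filter: "finite {S\<in>subset_choices d s. \<forall>k\<in>parties. P k (S k)}"
  unfolding sc_image by (intro finite_imageI finite_cartesian_product finite_XS)

lemma finite_sc: "finite (subset_choices d s)"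
  using finite_sc_filter[of d s "\<lambda>_ _. True"] by simp

lemma card_supersets:
  assumes "finite M" "B \<subseteq> M" "card B \<le> s"
  shows "card {T. B \<subseteq> T \<and> T \<subseteq> M \<and> card T = s} = (card M - card B) choose (s - card B)"
proof -
  have fB: "finite B" using assms finite_subset by blast
  have "bij_betw (\<lambda>T. T - B) {T. B \<subseteq> T \<and> T \<subseteq> M \<and> card T = s} {U. U \<subseteq> M - B \<and> card U = s - card B}"
  proof (rule bij_betw_byWitness[where f'="\<lambda>U. U \<union> B"])
    show "\<forall>a\<in>{T. B \<subseteq> T \<and> T \<subseteq> M \<and> card T = s}. a - B \<union> B = a" by auto
    show "\<forall>a'\<in>{U. U \<subseteq> M - B \<and> card U = s - card B}. a' \<union> B - B = a'" by auto
    show "(\<lambda>T. T - B) ` {T. B \<subseteq> T \<and> T \<subseteq> M \<and> card T = s} \<subseteq> {U. U \<subseteq> M - B \<and> card U = s - card B}"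
    proof
      fix U assume "U \<in> (\<lambda>T. T - B) ` {T. B \<subseteq> T \<and> T \<subseteq> M \<and> card T = s}"
      then obtain T where T: "B \<subseteq> T" "T \<subseteq> M" "card T = s" "U = T - B" by auto
      have "finite T" using T assms finite_subset by blast
      then show "U \<in> {U. U \<subseteq> M - B \<and> card U = s - card B}"
        using T by (auto simp: card_Diff_subset fB)
    qed
    show "(\<lambda>U. U \<union> B) ` {U. U \<subseteq> M - B \<and> card U = s - card B} \<subseteq> {T. B \<subseteq> T \<and> T \<subseteq> M \<and> card T = s}"
    proof
      fix T assume "T \<in> (\<lambda>U. U \<union> B) ` {U. U \<subseteq> M - B \<and> card U = s - card B}"
      then obtain U where U: "U \<subseteq> M - B" "card U = s - card B" "T = U \<union> B" by auto
      have fU: "finite U" using U assms finite_subset by (metis finite_Diff)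
      have "U \<inter> B = {}" using U by auto
      then have "card T = card U + card B" using U fU fB card_Un_disjoint by metis
      then show "T \<in> {T. B \<subseteq> T \<and> T \<subseteq> M \<and> card T = s}" using U assms by auto
    qed
  qed
  then have "card {T. B \<subseteq> T \<and> T \<subseteq> M \<and> card T = s} = card {U. U \<subseteq> M - B \<and> card U = s - card B}"
    by (rule bij_betw_same_card)
  also have "\<dots> = card (M - B) choose (s - card B)" using assms by (simp add: n_subsets)
  also have "card (M - B) = card M - card B" using assms fB by (simp add: card_Diff_subset)
  finally show ?thesis .
qed

lemma card_XS_pair:
  assumes "x < D" "y < D" "2 \<le> s"
  shows "card {T. T \<subseteq> {..<D} \<and> card T = s \<and> (x \<in> T \<and> y \<in> T)} =
     (if x = y then (D - 1) choose (s - 1) else (D - 2) choose (s - 2))"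
proof -
  have "{T. T \<subseteq> {..<D} \<and> card T = s \<and> (x \<in> T \<and> y \<in> T)} = {T. {x,y} \<subseteq> T \<and> T \<subseteq> {..<D} \<and> card T = s}"
    by auto
  also have "card \<dots> = (card {..<D} - card {x,y}) choose (s - card {x,y})"
    by (rule card_supersets) (use assms in \<open>auto simp: card_insert_if\<close>)
  finally show ?thesis by (cases "x = y") (simp_all add: numeral_2_eq_2)
qed

lemma prod4_bound:
  fixes u v r :: "nat \<Rightarrow> real"
  assumes u: "\<And>k. 0 \<le> u k" and v0: "\<And>k. k \<in> parties \<Longrightarrow> v k = r k * u k"
    and r: "1 \<le> r 0" "r 0 \<le> r 1" "r 1 \<le> r 2" "r 2 \<le> r 3"
    and e: "j \<noteq> l" "j \<in> parties" "l \<in> parties" "\<not> e j" "\<not> e l"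
  shows "(if e 0 then v 0 else u 0) * (if e 1 then v 1 else u 1) * (if e 2 then v 2 else u 2)
       * (if e 3 then v 3 else u 3) \<le> u 0 * u 1 * v 2 * v 3"
proof -
  have v: "v 0 = r 0 * u 0" "v 1 = r 1 * u 1" "v 2 = r 2 * u 2" "v 3 = r 3 * u 3"
    by (auto intro!: v0 simp: parties_eq)
  define f where "f k = (if e k then r k else 1)" for k
  have f1: "1 \<le> f 0" "1 \<le> f 1" "1 \<le> f 2" "1 \<le> f 3" using r unfolding f_def by auto
  have fr: "f 0 \<le> r 0" "f 1 \<le> r 1" "f 2 \<le> r 2" "f 3 \<le> r 3" using r unfolding f_def by auto
  have LHS: "(if e 0 then v 0 else u 0) * (if e 1 then v 1 else u 1) * (if e 2 then v 2 else u 2)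
       * (if e 3 then v 3 else u 3) = (u 0 * u 1 * u 2 * u 3) * (f 0 * f 1 * f 2 * f 3)"
    unfolding f_def v by (simp add: algebra_simps)
  have RHS: "u 0 * u 1 * v 2 * v 3 = (u 0 * u 1 * u 2 * u 3) * (r 2 * r 3)"
    unfolding v by (simp add: algebra_simps)
  have U: "0 \<le> u 0 * u 1 * u 2 * u 3" using u by simp
  have jl: "j \<in> {0,1,2,3}" "l \<in> {0,1,2,3}" using e parties_eq by auto
  have fj: "f j = 1" "f l = 1" using e unfolding f_def by auto
  have m: "\<And>a b c e. 1 \<le> a \<Longrightarrow> a \<le> c \<Longrightarrow> 1 \<le> b \<Longrightarrow> b \<le> e \<Longrightarrow> a * b \<le> c * (e::real)"
    by (rule mult_mono) auto
  have p: "f 0 * f 1 \<le> r 2 * r 3" "f 0 * f 2 \<le> r 2 * r 3" "f 0 * f 3 \<le> r 2 * r 3"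
    "f 1 * f 2 \<le> r 2 * r 3" "f 1 * f 3 \<le> r 2 * r 3" "f 2 * f 3 \<le> r 2 * r 3"
    "f 0 \<le> r 2 * r 3" "f 1 \<le> r 2 * r 3" "f 2 \<le> r 2 * r 3" "f 3 \<le> r 2 * r 3"
    using m[of "f 0" "r 2" "f 1" "r 3"] m[of "f 0" "r 2" "f 2" "r 3"] m[of "f 0" "r 2" "f 3" "r 3"]
      m[of "f 1" "r 2" "f 2" "r 3"] m[of "f 1" "r 2" "f 3" "r 3"] m[of "f 2" "r 2" "f 3" "r 3"]
      m[of "f 0" "r 2" 1 "r 3"] m[of "f 1" "r 2" 1 "r 3"] m[of "f 2" "r 2" 1 "r 3"] m[of 1 "r 2" "f 3" "r 3"]
      f1 fr r by auto
  have key: "f 0 * f 1 * f 2 * f 3 \<le> r 2 * r 3"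
    using jl fj e(1) p by (auto simp: mult.commute mult.left_commute)
  show ?thesis unfolding LHS RHS using key U by (intro mult_left_mono) auto
qed

definition Nsd :: "(nat \<Rightarrow> nat) \<Rightarrow> nat \<Rightarrow> real" where
  "Nsd d s = real ((d 0 - 2) choose (s - 2)) * real ((d 1 - 2) choose (s - 2))
                        * real ((d 2 - 1) choose (s - 1)) * real ((d 3 - 1) choose (s - 1))"

lemma binom_rel: assumes "2 \<le> D" "2 \<le> s"
  shows "real ((D - 1) choose (s - 1)) = real (D - 1) / real (s - 1) * real ((D - 2) choose (s - 2))"
proof -
  have "Suc (D - 2) * ((D - 2) choose (s - 2)) = (Suc (D - 2) choose Suc (s - 2)) * Suc (s - 2)"
    by (rule Suc_times_binomial_eq)
  moreover have "Suc (D - 2) = D - 1" "Suc (s - 2) = s - 1" using assms by auto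
  ultimately have "(D - 1) * ((D - 2) choose (s - 2)) = ((D - 1) choose (s - 1)) * (s - 1)" by simp
  then have "real (D - 1) * real ((D - 2) choose (s - 2)) = real ((D - 1) choose (s - 1)) * real (s - 1)"
    by (metis of_nat_mult)
  moreover have "real (s - 1) > 0" using assms by simp
  ultimately show ?thesis by (simp add: field_simps)
qed

lemma cnt_bound:
  assumes s: "2 \<le> s" "s \<le> d 0" and dm: "d 0 \<le> d 1" "d 1 \<le> d 2" "d 2 \<le> d 3"
    and xy: "\<forall>k\<in>parties. x k < d k \<and> y k < d k"
    and jl: "j \<noteq> l" "j \<in> parties" "l \<in> parties" "x j \<noteq> y j" "x l \<noteq> y l"
  shows "real (card {S\<in>subset_choices d s. \<forall>k\<in>parties. x k \<in> S k \<and> y k \<in> S k}) \<le> Nsd d s"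
proof -
  define u where "u k = real ((d k - 2) choose (s - 2))" for k
  define v where "v k = real ((d k - 1) choose (s - 1))" for k
  define r where "r k = real (d k - 1) / real (s - 1)" for k
  have c: "\<And>k. k \<in> parties \<Longrightarrow> card (XS d s (\<lambda>k T. x k \<in> T \<and> y k \<in> T) k) =
      (if x k = y k then (d k - 1) choose (s - 1) else (d k - 2) choose (s - 2))"
    unfolding XS_def using xy s by (intro card_XS_pair) auto
  have "real (card {S\<in>subset_choices d s. \<forall>k\<in>parties. x k \<in> S k \<and> y k \<in> S k})
     = (if x 0 = y 0 then v 0 else u 0) * (if x 1 = y 1 then v 1 else u 1) * (if x 2 = y 2 then v 2 else u 2)
       * (if x 3 = y 3 then v 3 else u 3)"
    using card_sc_filter[of d s "\<lambda>k T. x k \<in> T \<and> y k \<in> T"] c[of 0] c[of 1] c[of 2] c[of 3]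
    by (simp add: parties_eq u_def v_def)
  also have "\<dots> \<le> u 0 * u 1 * v 2 * v 3"
  proof (rule prod4_bound[where r = r and j = j and l = l])
    show "\<And>k. 0 \<le> u k" unfolding u_def by simp
    have d2: "\<And>k. k \<in> {0,1,2,3::nat} \<Longrightarrow> 2 \<le> d k" using s dm by auto
    show "\<And>k. k \<in> parties \<Longrightarrow> v k = r k * u k"
      unfolding u_def v_def r_def parties_eq using binom_rel[OF d2 s(1)] by auto
    have sp: "real (s - 1) > 0" using s by simp
    show "1 \<le> r 0" unfolding r_def using s sp by (simp add: field_simps)
    show "r 0 \<le> r 1" "r 1 \<le> r 2" "r 2 \<le> r 3" unfolding r_def using dm sp
      by (auto intro!: divide_right_mono)
  qed (use jl in auto)
  finally show ?thesis by (simp add: Nsd_def u_def v_def)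
qed

definition Gv :: "(nat \<Rightarrow> nat set) \<Rightarrow> qvec \<Rightarrow> qvec" where
  "Gv S \<psi> i = (if \<forall>k\<in>parties. i k \<in> S k then \<psi> i else 0)"

lemma P_merge: "(\<forall>k\<in>parties. merge A a b k \<in> S k) \<longleftrightarrow>
   (\<forall>k\<in>parties \<inter> A. a k \<in> S k) \<and> (\<forall>k\<in>parties - A. b k \<in> S k)"
  unfolding merge_def by auto

lemma mnr_Gv:
  "mnr A (Gv S \<psi>) a a' b b' =
    (if (\<forall>k\<in>parties. merge A a b k \<in> S k \<and> merge A a' b' k \<in> S k) then mnr A \<psi> a a' b b' else 0)"
proof -
  have e: "(\<forall>k\<in>parties. merge A a b k \<in> S k \<and> merge A a' b' k \<in> S k) \<longleftrightarrow>
     (\<forall>k\<in>parties. merge A a b k \<in> S k) \<and> (\<forall>k\<in>parties. merge A a' b' k \<in> S k)" by blast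
  show ?thesis unfolding e mnr_def Gv_def P_merge by auto
qed

lemma sum_S_Rm:
  "(\<Sum>S\<in>subset_choices d s. Rm d A (Gv S \<psi>)) =
   (\<Sum>a\<in>box d A. \<Sum>a'\<in>box d A. \<Sum>b\<in>box d (parties - A). \<Sum>b'\<in>box d (parties - A).
      real (card {S\<in>subset_choices d s. \<forall>k\<in>parties. merge A a b k \<in> S k \<and> merge A a' b' k \<in> S k})
      * (cmod (mnr A \<psi> a a' b b'))\<^sup>2)"
proof -
  have "(\<Sum>S\<in>subset_choices d s. Rm d A (Gv S \<psi>)) =
   (\<Sum>S\<in>subset_choices d s. \<Sum>a\<in>box d A. \<Sum>a'\<in>box d A. \<Sum>b\<in>box d (parties - A). \<Sum>b'\<in>box d (parties - A).
      (if (\<forall>k\<in>parties. merge A a b k \<in> S k \<and> merge A a' b' k \<in> S k) then (cmod (mnr A \<psi> a a' b b'))\<^sup>2 else 0))"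
    unfolding Rm_def mnr_Gv by (intro sum.cong refl) auto
  also have "\<dots> = (\<Sum>a\<in>box d A. \<Sum>a'\<in>box d A. \<Sum>b\<in>box d (parties - A). \<Sum>b'\<in>box d (parties - A).
      \<Sum>S\<in>subset_choices d s. 
      (if (\<forall>k\<in>parties. merge A a b k \<in> S k \<and> merge A a' b' k \<in> S k) then (cmod (mnr A \<psi> a a' b b'))\<^sup>2 else 0))"
    by (simp only: sum.swap[where A = "subset_choices d s"])
  also have "\<dots> = (\<Sum>a\<in>box d A. \<Sum>a'\<in>box d A. \<Sum>b\<in>box d (parties - A). \<Sum>b'\<in>box d (parties - A).
      real (card {S\<in>subset_choices d s. \<forall>k\<in>parties. merge A a b k \<in> S k \<and> merge A a' b' k \<in> S k})
      * (cmod (mnr A \<psi> a a' b b'))\<^sup>2)"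
    by (intro sum.cong refl) (simp add: sum.inter_filter[symmetric] finite_sc)
  finally show ?thesis .
qed

lemma box_diff: assumes "a \<in> box d A" "a' \<in> box d A" "a \<noteq> a'"
  shows "\<exists>k\<in>A. a k \<noteq> a' k"
proof (rule ccontr)
  assume "\<not> ?thesis"
  then have "\<And>k. a k = a' k" using assms(1,2) unfolding box_def
    by (metis (mono_tags, lifting) mem_Collect_eq)
  then show False using assms(3) by auto
qed

lemma sum_S_Rm_bound:
  assumes A: "A \<subseteq> parties"
    and s: "2 \<le> s" "s \<le> d 0" and dm: "d 0 \<le> d 1" "d 1 \<le> d 2" "d 2 \<le> d 3"
  shows "(\<Sum>S\<in>subset_choices d s. Rm d A (Gv S \<psi>)) \<le> Nsd d s * Rm d A \<psi>"
proof -
  have "(\<Sum>S\<in>subset_choices d s. Rm d A (Gv S \<psi>)) \<le>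
     (\<Sum>a\<in>box d A. \<Sum>a'\<in>box d A. \<Sum>b\<in>box d (parties - A). \<Sum>b'\<in>box d (parties - A).
      Nsd d s * (cmod (mnr A \<psi> a a' b b'))\<^sup>2)"
    unfolding sum_S_Rm
  proof (intro sum_mono)
    fix a a' b b' assume a: "a \<in> box d A" and a': "a' \<in> box d A"
      and b: "b \<in> box d (parties - A)" and b': "b' \<in> box d (parties - A)"
    show "real (card {S\<in>subset_choices d s. \<forall>k\<in>parties. merge A a b k \<in> S k \<and> merge A a' b' k \<in> S k})
      * (cmod (mnr A \<psi> a a' b b'))\<^sup>2 \<le> Nsd d s * (cmod (mnr A \<psi> a a' b b'))\<^sup>2"
    proof (cases "a = a' \<or> b = b'")
      case True
      then have "mnr A \<psi> a a' b b' = 0" unfolding mnr_def by (auto simp: mult.commute)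
      then show ?thesis by simp
    next
      case False
      then obtain j where j: "j \<in> A" "a j \<noteq> a' j" using box_diff[OF a a'] by auto
      obtain l where l: "l \<in> parties - A" "b l \<noteq> b' l" using box_diff[OF b b'] False by auto
      have "real (card {S\<in>subset_choices d s. \<forall>k\<in>parties. merge A a b k \<in> S k \<and> merge A a' b' k \<in> S k})
          \<le> Nsd d s"
      proof (rule cnt_bound[OF s dm, where j = j and l = l])
        show "\<forall>k\<in>parties. merge A a b k < d k \<and> merge A a' b' k < d k"
          using a a' b b' by (auto simp: merge_def box_def)
      qed (use j l A in \<open>auto simp: merge_def\<close>)
      then show ?thesis by (intro mult_right_mono) auto
    qed
  qed
  also have "\<dots> = Nsd d s * Rm d A \<psi>"
    unfolding Rm_def by (simp add: sum_distrib_left)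
  finally show ?thesis .
qed

lemma pure_sub:
  assumes s: "2 \<le> s" "s \<le> d 0" and dm: "d 0 \<le> d 1" "d 1 \<le> d 2" "d 2 \<le> d 3"
  shows "(\<Sum>S\<in>subset_choices d s. (conc_pure d (Gv S \<psi>))\<^sup>2) \<le> Nsd d s * (conc_pure d \<psi>)\<^sup>2"
proof -
  have "(\<Sum>S\<in>subset_choices d s. (conc_pure d (Gv S \<psi>))\<^sup>2) =
      (\<Sum>A\<in>bipartitions. \<Sum>S\<in>subset_choices d s. Rm d A (Gv S \<psi>)) / 8"
    unfolding conc_pure_sq Rt_def by (simp add: sum_divide_distrib[symmetric] sum.swap[where A = "subset_choices d s"])
  also have "\<dots> \<le> (\<Sum>A\<in>bipartitions. Nsd d s * Rm d A \<psi>) / 8"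
    by (intro divide_right_mono sum_mono sum_S_Rm_bound[OF _ s dm] bip_sub) auto
  also have "\<dots> = Nsd d s * (conc_pure d \<psi>)\<^sup>2"
    unfolding conc_pure_sq Rt_def by (simp add: sum_distrib_left)
  finally show ?thesis .
qed

definition Qf :: "'a set \<Rightarrow> ('a \<Rightarrow> 'a \<Rightarrow> complex) \<Rightarrow> ('a \<Rightarrow> complex) \<Rightarrow> complex" where
  "Qf I \<sigma> v = (\<Sum>i\<in>I. \<Sum>j\<in>I. cnj (v i) * \<sigma> i j * v j)"

lemma Qf_insert:
  assumes "finite F" "x \<notin> F"
  shows "Qf (insert x F) \<sigma> v = cnj (v x) * \<sigma> x x * v x + (\<Sum>j\<in>F. cnj (v x) * \<sigma> x j * v j)
     + (\<Sum>i\<in>F. cnj (v i) * \<sigma> i x * v x) + Qf F \<sigma> v"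
  unfolding Qf_def using assms by (simp add: sum.distrib algebra_simps)

lemma Qf_cong: "(\<And>i. i \<in> I \<Longrightarrow> v i = v' i) \<Longrightarrow> Qf I \<sigma> v = Qf I \<sigma> v'"
  unfolding Qf_def by (intro sum.cong refl) auto

lemma Qf_two:
  assumes "finite I" "x \<in> I" "j \<in> I" "x \<noteq> j" "\<And>i. i \<notin> {x, j} \<Longrightarrow> v i = 0"
  shows "Qf I \<sigma> v = cnj (v x) * \<sigma> x x * v x + cnj (v x) * \<sigma> x j * v j
     + cnj (v j) * \<sigma> j x * v x + cnj (v j) * \<sigma> j j * v j"
proof -
  have "Qf I \<sigma> v = Qf {x, j} \<sigma> v"
    unfolding Qf_def
  proof -
    have "(\<Sum>i\<in>I. \<Sum>j\<in>I. cnj (v i) * \<sigma> i j * v j) = (\<Sum>i\<in>{x,j}. \<Sum>j\<in>I. cnj (v i) * \<sigma> i j * v j)"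
      by (rule sum.mono_neutral_right) (use assms in auto)
    also have "\<dots> = (\<Sum>i\<in>{x,j}. \<Sum>j'\<in>{x,j}. cnj (v i) * \<sigma> i j' * v j')"
      by (intro sum.cong refl sum.mono_neutral_right) (use assms in auto)
    finally show "(\<Sum>i\<in>I. \<Sum>j\<in>I. cnj (v i) * \<sigma> i j * v j) = (\<Sum>i\<in>{x,j}. \<Sum>j'\<in>{x,j}. cnj (v i) * \<sigma> i j' * v j')" .
  qed
  then show ?thesis using assms(4) unfolding Qf_def by (simp add: algebra_simps)
qed

lemma zero_row:
  assumes fin: "finite I" and xj: "x \<in> I" "j \<in> I" "x \<noteq> j"
    and herm: "\<forall>i\<in>I. \<forall>j\<in>I. \<sigma> j i = cnj (\<sigma> i j)"
    and psd: "\<forall>v. 0 \<le> Re (Qf I \<sigma> v)"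
    and z: "\<sigma> x x = 0"
  shows "\<sigma> x j = 0"
proof (rule ccontr)
  assume a0: "\<sigma> x j \<noteq> 0"
  define a where "a = \<sigma> x j"
  have ja: "\<sigma> j x = cnj a" unfolding a_def by (rule herm[rule_format, OF xj(1) xj(2)])
  have na: "cnj a * a = of_real ((cmod a)\<^sup>2)" by (simp only: complex_norm_square mult.commute)
  have pa: "(cmod a)\<^sup>2 > 0" using a0 unfolding a_def by simp
  define t where "t = (Re (\<sigma> j j) + 1) / (2 * (cmod a)\<^sup>2)"
  define v where "v i = (if i = x then - (of_real t) * a else if i = j then 1 else 0)" for i
  have "Qf I \<sigma> v = cnj (v x) * \<sigma> x x * v x + cnj (v x) * \<sigma> x j * v j
     + cnj (v j) * \<sigma> j x * v x + cnj (v j) * \<sigma> j j * v j"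
    by (rule Qf_two[OF fin xj]) (auto simp: v_def)
  also have "\<dots> = \<sigma> j j - 2 * of_real t * (cnj a * a)"
    using xj(3) unfolding v_def z ja a_def[symmetric] by (simp add: algebra_simps)
  finally have "Re (Qf I \<sigma> v) = Re (\<sigma> j j) - 2 * t * (cmod a)\<^sup>2"
    unfolding na by simp
  also have "\<dots> = -1" unfolding t_def using pa by (simp add: field_simps)
  finally show False using psd by (metis neg_0_le_iff_le not_one_le_zero)
qed

lemma schur_Q:
  assumes fin: "finite F" and x: "x \<notin> F"
    and herm: "\<forall>i\<in>insert x F. \<forall>j\<in>insert x F. \<sigma> j i = cnj (\<sigma> i j)"
    and r: "\<sigma> x x = of_real r" "r > 0"
    and psi0: "\<And>j. phz j = \<sigma> j x / of_real (sqrt r)"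
    and tau: "\<And>i j. \<tau> i j = \<sigma> i j - phz i * cnj (phz j)"
    and w: "w = (\<Sum>j\<in>F. \<sigma> x j * v j)"
  shows "Qf F \<tau> v = Qf (insert x F) \<sigma> (v(x := - w / of_real r))"
proof -
  define y where "y = - w / of_real r"
  define v' where "v' = v(x := y)"
  have v'F: "\<And>i. i \<in> F \<Longrightarrow> v' i = v i" using x unfolding v'_def by auto
  have v'x: "v' x = y" unfolding v'_def by simp
  have hx: "\<And>i. i \<in> F \<Longrightarrow> \<sigma> i x = cnj (\<sigma> x i)" by (rule herm[rule_format]) auto
  have cw: "(\<Sum>i\<in>F. cnj (v i) * \<sigma> i x) = cnj w"
    unfolding w cnj_sum by (intro sum.cong refl) (simp add: hx mult.commute)
  have cw2: "(\<Sum>j\<in>F. cnj (\<sigma> j x) * v j) = w"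
    unfolding w by (intro sum.cong refl) (simp add: hx)
  define sq where "sq = complex_of_real (sqrt r)"
  have sq: "cnj sq = sq" "sq * sq = of_real r" "sq \<noteq> 0" using r(2) unfolding sq_def
    by (auto simp flip: of_real_mult)
  have "Qf (insert x F) \<sigma> v' = cnj y * of_real r * y + cnj y * w + cnj w * y + Qf F \<sigma> v"
  proof -
    have "Qf (insert x F) \<sigma> v' = cnj (v' x) * \<sigma> x x * v' x + (\<Sum>j\<in>F. cnj (v' x) * \<sigma> x j * v' j)
     + (\<Sum>i\<in>F. cnj (v' i) * \<sigma> i x * v' x) + Qf F \<sigma> v'" by (rule Qf_insert[OF fin x])
    also have "(\<Sum>j\<in>F. cnj (v' x) * \<sigma> x j * v' j) = cnj y * w"
      unfolding w sum_distrib_left by (intro sum.cong refl) (simp add: v'F v'x mult.assoc)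
    also have "(\<Sum>i\<in>F. cnj (v' i) * \<sigma> i x * v' x) = cnj w * y"
      unfolding cw[symmetric] sum_distrib_right by (intro sum.cong refl) (simp add: v'F v'x)
    also have "Qf F \<sigma> v' = Qf F \<sigma> v" by (rule Qf_cong) (simp add: v'F)
    finally show ?thesis unfolding v'x r(1) .
  qed
  also have "\<dots> = Qf F \<sigma> v - cnj w * w / of_real r"
    unfolding y_def using r(2) by (simp add: field_simps)
  finally have L: "Qf (insert x F) \<sigma> v' = Qf F \<sigma> v - cnj w * w / of_real r" .
  have "Qf F \<tau> v = Qf F \<sigma> v - (\<Sum>i\<in>F. \<Sum>j\<in>F. cnj (v i) * (phz i * cnj (phz j)) * v j)"
    unfolding Qf_def tau by (simp add: algebra_simps sum_subtractf)
  also have "(\<Sum>i\<in>F. \<Sum>j\<in>F. cnj (v i) * (phz i * cnj (phz j)) * v j)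
      = (\<Sum>i\<in>F. cnj (v i) * phz i) * (\<Sum>j\<in>F. cnj (phz j) * v j)"
    by (simp add: sum_product algebra_simps)
  also have "(\<Sum>i\<in>F. cnj (v i) * phz i) = cnj w / sq"
    unfolding cw[symmetric] psi0 sq_def[symmetric] sum_divide_distrib by (simp add: algebra_simps)
  also have "(\<Sum>j\<in>F. cnj (phz j) * v j) = w / sq"
    unfolding cw2[symmetric] psi0 sq_def[symmetric] sum_divide_distrib using sq(1) by (simp add: algebra_simps)
  also have "cnj w / sq * (w / sq) = cnj w * w / of_real r"
    using sq by (simp add: field_simps)
  finally show ?thesis using L unfolding v'_def y_def by simp
qed

lemma Qf_single:
  assumes "finite F" "x \<notin> F"
  shows "Qf (insert x F) \<sigma> (\<lambda>i. if i = x then 1 else 0) = \<sigma> x x"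
proof -
  have "\<And>i. i \<in> F \<Longrightarrow> i \<noteq> x" using assms by auto
  then show ?thesis using assms by (simp add: Qf_insert Qf_def cong: sum.cong)
qed

lemma psd_decomp:
  assumes "finite I"
  shows "(\<forall>i\<in>I. \<forall>j\<in>I. \<sigma> j i = cnj (\<sigma> i j)) \<Longrightarrow> (\<forall>v. 0 \<le> Re (Qf I \<sigma> v)) \<Longrightarrow>
    \<exists>(n::nat) \<psi>. \<forall>i\<in>I. \<forall>j\<in>I. \<sigma> i j = (\<Sum>k<n. \<psi> k i * cnj (\<psi> k j))"
  using assms
proof (induction I arbitrary: \<sigma> rule: finite_induct)
  case empty
  then show ?case by auto
next
  case (insert x F \<sigma>)
  note herm = insert.prems(1) and psd = insert.prems(2)
  define r where "r = Re (\<sigma> x x)"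
  have r0: "0 \<le> r" using psd[rule_format, of "\<lambda>i. if i = x then 1 else 0"]
    unfolding r_def Qf_single[OF insert.hyps(1,2)] .
  have "\<sigma> x x = cnj (\<sigma> x x)" by (rule herm[rule_format]) auto
  then have rx: "\<sigma> x x = of_real r" unfolding r_def by (simp add: complex_eq_iff)
  define \<psi>0 where "\<psi>0 j = (if r = 0 then 0 else \<sigma> j x / of_real (sqrt r))" for j
  define \<tau> where "\<tau> i j = \<sigma> i j - \<psi>0 i * cnj (\<psi>0 j)" for i j
  have hF: "\<forall>i\<in>F. \<forall>j\<in>F. \<tau> j i = cnj (\<tau> i j)"
  proof (intro ballI)
    fix i j assume "i \<in> F" "j \<in> F"
    then have "\<sigma> j i = cnj (\<sigma> i j)" by (intro herm[rule_format]) auto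
    then show "\<tau> j i = cnj (\<tau> i j)" unfolding \<tau>_def by simp
  qed
  have row: "\<And>j. j \<in> insert x F \<Longrightarrow> \<tau> x j = 0 \<and> \<tau> j x = 0"
  proof -
    fix j assume j: "j \<in> insert x F"
    have hj: "\<sigma> j x = cnj (\<sigma> x j)" by (rule herm[rule_format]) (use j in auto)
    show "\<tau> x j = 0 \<and> \<tau> j x = 0"
    proof (cases "r = 0")
      case True
      have "\<sigma> x j = 0"
      proof (cases "j = x")
        case True then show ?thesis using rx \<open>r = 0\<close> by simp
      next
        case False
        then have xj: "x \<noteq> j" by simp
        have z: "\<sigma> x x = 0" using rx \<open>r = 0\<close> by simp
        show ?thesis
          by (rule zero_row[OF _ _ j xj herm psd z]) (use insert.hyps in auto)
      qed
      then show ?thesis unfolding \<tau>_def \<psi>0_def using True hj by simp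
    next
      case False
      then have rp: "r > 0" using r0 by simp
      define sq where "sq = complex_of_real (sqrt r)"
      have sq: "cnj sq = sq" "sq * sq = of_real r" "sq \<noteq> 0" using rp unfolding sq_def
        by (auto simp flip: of_real_mult)
      have "\<tau> x j = \<sigma> x j - \<sigma> x x * cnj (\<sigma> j x) / (sq * sq)"
        unfolding \<tau>_def \<psi>0_def sq_def[symmetric] using False sq(1) by simp
      also have "\<dots> = 0" using hj rx sq rp by simp
      finally have 1: "\<tau> x j = 0" .
      have "\<tau> j x = \<sigma> j x - \<sigma> j x * cnj (\<sigma> x x) / (sq * sq)"
        unfolding \<tau>_def \<psi>0_def sq_def[symmetric] using False sq(1) by simp
      also have "\<dots> = 0" using rx sq rp by simp
      finally show ?thesis using 1 by simp
    qed
  qed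
  have pF: "\<forall>v. 0 \<le> Re (Qf F \<tau> v)"
  proof
    fix v
    show "0 \<le> Re (Qf F \<tau> v)"
    proof (cases "r = 0")
      case True
      then have "\<tau> = \<sigma>" unfolding \<tau>_def \<psi>0_def by (simp add: fun_eq_iff)
      have "Qf (insert x F) \<sigma> (v(x := 0)) = Qf F \<sigma> (v(x := 0))"
        using Qf_insert[OF insert.hyps(1,2), of \<sigma> "v(x := 0)"] by simp
      also have "\<dots> = Qf F \<sigma> v" by (rule Qf_cong) (use insert.hyps in auto)
      finally show ?thesis using psd \<open>\<tau> = \<sigma>\<close> by metis
    next
      case False
      then have rp: "r > 0" using r0 by simp
      have "Qf F \<tau> v = Qf (insert x F) \<sigma> (v(x := - (\<Sum>j\<in>F. \<sigma> x j * v j) / of_real r))"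
        by (rule schur_Q[where phz = \<psi>0, OF insert.hyps(1,2) herm rx rp _ _ refl]) (simp add: \<psi>0_def False, simp add: \<tau>_def)
      then show ?thesis using psd by metis
    qed
  qed
  obtain n' :: nat and \<psi>' where IH: "\<forall>i\<in>F. \<forall>j\<in>F. \<tau> i j = (\<Sum>k<n'. \<psi>' k i * cnj (\<psi>' k j))"
    using insert.IH[OF hF pF] by (elim exE) (rule that, assumption)
  define \<psi> where "\<psi> k = (if k < n' then (\<psi>' k)(x := 0) else \<psi>0)" for k
  have "\<forall>i\<in>insert x F. \<forall>j\<in>insert x F. \<sigma> i j = (\<Sum>k<Suc n'. \<psi> k i * cnj (\<psi> k j))"
  proof (intro ballI)
    fix i j assume i: "i \<in> insert x F" and j: "j \<in> insert x F"
    have s: "(\<Sum>k<Suc n'. \<psi> k i * cnj (\<psi> k j)) = (\<Sum>k<n'. ((\<psi>' k)(x := 0)) i * cnj (((\<psi>' k)(x := 0)) j))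
       + \<psi>0 i * cnj (\<psi>0 j)"
      unfolding \<psi>_def by simp
    have "\<tau> i j = (\<Sum>k<n'. ((\<psi>' k)(x := 0)) i * cnj (((\<psi>' k)(x := 0)) j))"
    proof (cases "i = x \<or> j = x")
      case True
      then show ?thesis using row i j by auto
    next
      case False
      then have "i \<in> F" "j \<in> F" using i j by auto
      then show ?thesis using IH False by simp
    qed
    then show "\<sigma> i j = (\<Sum>k<Suc n'. \<psi> k i * cnj (\<psi> k j))"
      unfolding s \<tau>_def by (simp add: algebra_simps)
  qed
  then show ?case by blast
qed

definition decomp :: "(nat \<Rightarrow> nat) \<Rightarrow> qop \<Rightarrow> nat \<Rightarrow> (nat \<Rightarrow> qvec) \<Rightarrow> bool" where
  "decomp d \<sigma> n \<psi> \<longleftrightarrow> (\<forall>i\<in>box d parties. \<forall>j\<in>box d parties. \<sigma> i j = (\<Sum>k<n. \<psi> k i * cnj (\<psi> k j)))"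

definition CS :: "(nat \<Rightarrow> nat) \<Rightarrow> qop \<Rightarrow> real set" where
  "CS d \<sigma> = {(\<Sum>k<n. conc_pure d (\<psi> k)) | n \<psi>. decomp d \<sigma> n \<psi>}"

lemma cm_CS: "conc_mixed d \<sigma> = Inf (CS d \<sigma>)"
  unfolding conc_mixed_def CS_def decomp_def ..

lemma bdd_CS: "bdd_below (CS d \<sigma>)"
  unfolding CS_def by (rule bdd_belowI[where m = 0]) (auto intro: sum_nonneg conc_pure_nonneg)

lemma cm_le: "decomp d \<sigma> n \<psi> \<Longrightarrow> conc_mixed d \<sigma> \<le> (\<Sum>k<n. conc_pure d (\<psi> k))"
  unfolding cm_CS by (rule cInf_lower[OF _ bdd_CS]) (auto simp: CS_def)

lemma cm_ge0: "decomp d \<sigma> n \<psi> \<Longrightarrow> 0 \<le> conc_mixed d \<sigma>"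
  unfolding cm_CS by (rule cInf_greatest) (auto simp: CS_def intro: sum_nonneg conc_pure_nonneg)

lemma cm_approx:
  assumes "decomp d \<sigma> n0 \<psi>0" "0 < e"
  shows "\<exists>n \<psi>. decomp d \<sigma> n \<psi> \<and> (\<Sum>k<n. conc_pure d (\<psi> k)) < conc_mixed d \<sigma> + e"
proof -
  have ne: "CS d \<sigma> \<noteq> {}" using assms(1) unfolding CS_def by blast
  have "Inf (CS d \<sigma>) < conc_mixed d \<sigma> + e" using assms(2) cm_CS by simp
  then obtain y where "y \<in> CS d \<sigma>" "y < conc_mixed d \<sigma> + e"
    using cInf_less_iff[OF ne bdd_CS] by blast
  then show ?thesis unfolding CS_def by blast
qed

lemma rho_decomp: assumes "density_op d \<rho>" shows "\<exists>n \<psi>. decomp d \<rho> n \<psi>"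
proof -
  have herm: "\<forall>i\<in>box d parties. \<forall>j\<in>box d parties. \<rho> j i = cnj (\<rho> i j)"
    using assms unfolding density_op_def by blast
  have psd: "\<forall>v. 0 \<le> Re (Qf (box d parties) \<rho> v)"
    using assms unfolding density_op_def Qf_def by blast
  show ?thesis using psd_decomp[OF finite_box[OF order_refl] herm psd] unfolding decomp_def by blast
qed

lemma sub_decomp: "decomp d \<rho> n \<psi> \<Longrightarrow> decomp d (substate S \<rho>) n (\<lambda>k. Gv S (\<psi> k))"
  unfolding decomp_def
proof (intro ballI)
  fix i j assume "\<forall>i\<in>box d parties. \<forall>j\<in>box d parties. \<rho> i j = (\<Sum>k<n. \<psi> k i * cnj (\<psi> k j))"
    "i \<in> box d parties" "j \<in> box d parties"
  then have r: "\<rho> i j = (\<Sum>k<n. \<psi> k i * cnj (\<psi> k j))" by blast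
  show "substate S \<rho> i j = (\<Sum>k<n. Gv S (\<psi> k) i * cnj (Gv S (\<psi> k) j))"
  proof (cases "\<forall>k\<in>parties. i k \<in> S k")
    case Pi: True
    show ?thesis
    proof (cases "\<forall>k\<in>parties. j k \<in> S k")
      case True then show ?thesis using Pi r unfolding substate_def Gv_def by simp
    next
      case False
      then have f: "(\<forall>k\<in>parties. j k \<in> S k) = False" by simp
      show ?thesis unfolding substate_def Gv_def f using False by auto
    qed
  next
    case False
    then have f: "(\<forall>k\<in>parties. i k \<in> S k) = False" by simp
    show ?thesis unfolding substate_def Gv_def f using False by auto
  qed
qed

lemma minkowski:
  "L2_set (\<lambda>S. \<Sum>k<(n::nat). f S k) X \<le> (\<Sum>k<n. L2_set (\<lambda>S. f S k) X)"
proof (induction n)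
  case 0
  then show ?case by (simp add: L2_set_def)
next
  case (Suc n)
  have "L2_set (\<lambda>S. \<Sum>k<Suc n. f S k) X = L2_set (\<lambda>S. (\<Sum>k<n. f S k) + f S n) X" by simp
  also have "\<dots> \<le> L2_set (\<lambda>S. \<Sum>k<n. f S k) X + L2_set (\<lambda>S. f S n) X"
    by (rule L2_set_triangle_ineq)
  also have "\<dots> \<le> (\<Sum>k<n. L2_set (\<lambda>S. f S k) X) + L2_set (\<lambda>S. f S n) X"
    using Suc by simp
  finally show ?case by simp
qed

lemma main_s:
  assumes rho: "density_op d \<rho>"
    and s: "2 \<le> s" "s \<le> d 0" and dm: "d 0 \<le> d 1" "d 1 \<le> d 2" "d 2 \<le> d 3"
  shows "(\<Sum>S\<in>subset_choices d s. (conc_mixed d (substate S \<rho>))\<^sup>2) \<le> Nsd d s * (conc_mixed d \<rho>)\<^sup>2"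
proof -
  define SC where "SC = subset_choices d s"
  define c where "c = conc_mixed d \<rho>"
  define Y where "Y = (\<Sum>S\<in>SC. (conc_mixed d (substate S \<rho>))\<^sup>2)"
  define N where "N = Nsd d s"
  obtain n0 \<psi>0 where d0: "decomp d \<rho> n0 \<psi>0" using rho_decomp[OF rho] by blast
  have c0: "0 \<le> c" unfolding c_def by (rule cm_ge0[OF d0])
  have N0: "0 \<le> N" unfolding N_def Nsd_def by simp
  have Y0: "0 \<le> Y" unfolding Y_def by (simp add: sum_nonneg)
  have gen: "sqrt Y \<le> sqrt N * (\<Sum>k<n. conc_pure d (\<psi> k))" if dec: "decomp d \<rho> n \<psi>" for n \<psi>
  proof -
    define a where "a S k = conc_pure d (Gv S (\<psi> k))" for S k
    have "Y \<le> (\<Sum>S\<in>SC. (\<Sum>k<n. a S k)\<^sup>2)"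
      unfolding Y_def
    proof (intro sum_mono power_mono)
      fix S
      show "0 \<le> conc_mixed d (substate S \<rho>)" by (rule cm_ge0[OF sub_decomp[OF dec]])
      show "conc_mixed d (substate S \<rho>) \<le> (\<Sum>k<n. a S k)"
        unfolding a_def by (rule cm_le[OF sub_decomp[OF dec]])
    qed
    then have "sqrt Y \<le> L2_set (\<lambda>S. \<Sum>k<n. a S k) SC" unfolding L2_set_def by simp
    also have "\<dots> \<le> (\<Sum>k<n. L2_set (\<lambda>S. a S k) SC)" by (rule minkowski)
    also have "\<dots> \<le> (\<Sum>k<n. sqrt N * conc_pure d (\<psi> k))"
    proof (intro sum_mono)
      fix k
      have "L2_set (\<lambda>S. a S k) SC \<le> sqrt (N * (conc_pure d (\<psi> k))\<^sup>2)"
        unfolding L2_set_def a_def SC_def N_def by (intro real_sqrt_le_mono pure_sub[OF s dm])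
      also have "\<dots> = sqrt N * conc_pure d (\<psi> k)"
        by (simp add: real_sqrt_mult conc_pure_nonneg)
      finally show "L2_set (\<lambda>S. a S k) SC \<le> sqrt N * conc_pure d (\<psi> k)" .
    qed
    finally show ?thesis by (simp add: sum_distrib_left)
  qed
  have "sqrt Y \<le> sqrt N * c"
  proof (rule field_le_epsilon)
    fix e :: real assume e: "0 < e"
    define e' where "e' = e / (sqrt N + 1)"
    have sN: "0 < sqrt N + 1" using N0 by (simp add: add_nonneg_pos)
    have e': "0 < e'" unfolding e'_def using e sN by (simp add: divide_pos_pos)
    obtain n \<psi> where dec: "decomp d \<rho> n \<psi>" and lt: "(\<Sum>k<n. conc_pure d (\<psi> k)) < c + e'"
      using cm_approx[OF d0 e'] unfolding c_def by blast
    have "sqrt Y \<le> sqrt N * (\<Sum>k<n. conc_pure d (\<psi> k))" by (rule gen[OF dec])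
    also have "\<dots> \<le> sqrt N * (c + e')" using lt N0 by (intro mult_left_mono) auto
    also have "\<dots> = sqrt N * c + sqrt N * e'" by (simp add: algebra_simps)
    also have "sqrt N * e' \<le> e"
    proof -
      have "sqrt N * e' = e * (sqrt N / (sqrt N + 1))" unfolding e'_def by simp
      also have "\<dots> \<le> e * 1" using e sN by (intro mult_left_mono) auto
      finally show ?thesis by simp
    qed
    finally show "sqrt Y \<le> sqrt N * c + e" by simp
  qed
  also have "sqrt N * c = sqrt (N * c\<^sup>2)" using c0 by (simp add: real_sqrt_mult)
  finally have "Y \<le> N * c\<^sup>2" using Y0 N0 by simp
  then show ?thesis unfolding Y_def SC_def N_def c_def .
qed

lemma Nsd_pos:
  assumes "2 \<le> s" "s \<le> d 0" "d 0 \<le> d 1" "d 1 \<le> d 2" "d 2 \<le> d 3"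
  shows "0 < Nsd d s"
  unfolding Nsd_def using assms by (simp add: zero_less_binomial_iff)

theorem corollary1:
  fixes d :: "nat \<Rightarrow> nat" and \<rho> :: qop and m :: nat and p :: "nat \<Rightarrow> real"
  assumes "2 \<le> d 0" "d 0 \<le> d 1" "d 1 \<le> d 2" "d 2 \<le> d 3"
    and "density_op d \<rho>"
    and "2 \<le> m" "m \<le> d 0"
    and "\<forall>s\<in>{2..m}. 0 \<le> p s \<and> p s \<le> 1"
    and "(\<Sum>s=2..m. p s) = 1"
  shows "(conc_mixed d \<rho>)\<^sup>2 \<ge>
    (\<Sum>s=2..m. p s / (real ((d 0 - 2) choose (s - 2)) * real ((d 1 - 2) choose (s - 2))
                        * real ((d 2 - 1) choose (s - 1)) * real ((d 3 - 1) choose (s - 1)))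
       * (\<Sum>S\<in>subset_choices d s. (conc_mixed d (substate S \<rho>))\<^sup>2))"
proof -
  have "(\<Sum>s=2..m. p s / (real ((d 0 - 2) choose (s - 2)) * real ((d 1 - 2) choose (s - 2))
                        * real ((d 2 - 1) choose (s - 1)) * real ((d 3 - 1) choose (s - 1)))
       * (\<Sum>S\<in>subset_choices d s. (conc_mixed d (substate S \<rho>))\<^sup>2))
      = (\<Sum>s=2..m. p s / Nsd d s * (\<Sum>S\<in>subset_choices d s. (conc_mixed d (substate S \<rho>))\<^sup>2))"
    unfolding Nsd_def ..
  also have "\<dots> \<le> (\<Sum>s=2..m. p s * (conc_mixed d \<rho>)\<^sup>2)"
  proof (intro sum_mono)
    fix s assume s: "s \<in> {2..m}"
    then have s2: "2 \<le> s" "s \<le> d 0" using assms by auto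
    have N: "0 < Nsd d s" by (rule Nsd_pos[OF s2 assms(2-4)])
    have p: "0 \<le> p s" using assms s by auto
    have "p s / Nsd d s * (\<Sum>S\<in>subset_choices d s. (conc_mixed d (substate S \<rho>))\<^sup>2)
        \<le> p s / Nsd d s * (Nsd d s * (conc_mixed d \<rho>)\<^sup>2)"
      by (intro mult_left_mono main_s[OF assms(5) s2 assms(2-4)]) (use N p in auto)
    also have "\<dots> = p s * (conc_mixed d \<rho>)\<^sup>2" using N by simp
    finally show "p s / Nsd d s * (\<Sum>S\<in>subset_choices d s. (conc_mixed d (substate S \<rho>))\<^sup>2)
        \<le> p s * (conc_mixed d \<rho>)\<^sup>2" .
  qed
  also have "\<dots> = (conc_mixed d \<rho>)\<^sup>2" using assms(9) by (simp add: sum_distrib_right[symmetric])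
  finally show ?thesis .
qed

end
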